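(* Let $\delta\in(0,1)$ and an even integer $n_{\mathrm{in}}\ge2$ be given, let $b_1,b_2,\dots>0$, $b_{\max,i}:=\max_{j\le i}b_j$, and $a_i:=b_ib_{\max,i}(\frac12+\log(2n_{\mathrm{in}}/\delta))$. Define $\sigma_0^2:=0$ and, for $i\ge1$, $$\sigma_i^2:=\sigma_{i-1}^2+b_i^2\Big(1+\frac{\sigma_{i-1}^2}{a_i^2}(b_i^2-2a_i)\Big)_+ .$$ Then for each $i\ge1$, $$\sigma_i^2\le c_i:=\max_{j\in[i]}\max(b_j^2,r_j),\qquad\text{where } r_i:=\frac{a_i^2}{2a_i-b_i^2}\le\frac{a_i^2}{2a_i-b_ib_{\max,i}}.$$
   Context: $(x)_+=\max(x,0)$. (In the paper $b_i=\|\mathbf{k}(x_{2i-1},\cdot)-\mathbf{k}(x_{2i},\cdot)\|_{\mathbf{k}}$ and $a_i$ are the quantities of the Kernel Halving algorithm, and $\sigma_i$ are the sub-Gaussian constants of the associated self-balancing Hilbert walk.) *)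

theory Defs
  imports "HOL-Analysis.Analysis"
begin

text \<open>Sequences are indexed from 1; the value at index 0 is irrelevant.\<close>

definition bmax :: "(nat \<Rightarrow> real) \<Rightarrow> nat \<Rightarrow> real" where
  "bmax b i = Max (b ` {1..i})"

definition kh_a :: "real \<Rightarrow> nat \<Rightarrow> (nat \<Rightarrow> real) \<Rightarrow> nat \<Rightarrow> real" where
  "kh_a \<delta> n_in b i = b i * bmax b i * (1/2 + ln (2 * real n_in / \<delta>))"

fun sigma2 :: "real \<Rightarrow> nat \<Rightarrow> (nat \<Rightarrow> real) \<Rightarrow> nat \<Rightarrow> real" where
  "sigma2 \<delta> n_in b 0 = 0"
| "sigma2 \<delta> n_in b (Suc i) =
     sigma2 \<delta> n_in b i + (b (Suc i))\<^sup>2 *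
       max 0 (1 + sigma2 \<delta> n_in b i / (kh_a \<delta> n_in b (Suc i))\<^sup>2
                  * ((b (Suc i))\<^sup>2 - 2 * kh_a \<delta> n_in b (Suc i)))"

definition kh_r :: "real \<Rightarrow> nat \<Rightarrow> (nat \<Rightarrow> real) \<Rightarrow> nat \<Rightarrow> real" where
  "kh_r \<delta> n_in b i = (kh_a \<delta> n_in b i)\<^sup>2 / (2 * kh_a \<delta> n_in b i - (b i)\<^sup>2)"

end

theory Submission
  imports Defs
begin

lemma step_bound:
  fixes a b s :: real
  assumes a: "a > 0" and d: "2*a - b^2 > 0"
  shows "s + b^2 * max 0 (1 + s / a^2 * (b^2 - 2*a)) \<le> max s (a^2 / (2*a - b^2))"
proof (cases "1 + s / a^2 * (b^2 - 2*a) \<le> 0")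
  case True
  then show ?thesis by simp
next
  case False
  define t where "t = b^2 * (2*a - b^2) / a^2"
  define r where "r = a^2 / (2*a - b^2)"
  have a2: "a^2 > 0" using a by simp
  have t0: "t \<ge> 0" unfolding t_def using d a2 by simp
  have "a^2 - b^2 * (2*a - b^2) = (a - b^2)^2" by (simp add: power2_eq_square algebra_simps)
  hence "b^2 * (2*a - b^2) \<le> a^2" by (smt (verit) zero_le_power2)
  hence t1: "t \<le> 1" unfolding t_def using a2 by simp
  have tr: "t * r = b^2" unfolding t_def r_def using a2 d by (simp add: field_simps)
  have val: "s + b^2 * max 0 (1 + s / a^2 * (b^2 - 2*a)) = s + b^2 - t * s"
    using False a2 unfolding t_def by (simp add: field_simps)
  show ?thesis
  proof (cases "s \<le> r")
    case True
    have "s + b^2 - t * s - r = (s - r) * (1 - t)" using tr by (simp add: algebra_simps)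
    also have "\<dots> \<le> 0" using True t1 by (simp add: mult_nonpos_nonneg)
    finally show ?thesis using val r_def by simp
  next
    case False
    have "s + b^2 - t * s - s = t * (r - s)" using tr by (simp add: algebra_simps)
    also have "\<dots> \<le> 0" using False t0 by (simp add: mult_nonneg_nonpos)
    finally show ?thesis using val by simp
  qed
qed

theorem lemmaB1:
  fixes \<delta> :: real and n_in :: nat and b :: "nat \<Rightarrow> real" and i :: nat
  assumes "0 < \<delta>" and "\<delta> < 1"
    and "even n_in" and "2 \<le> n_in"
    and "\<And>j. 1 \<le> j \<Longrightarrow> 0 < b j"
    and "1 \<le> i"
  shows "sigma2 \<delta> n_in b i \<le> Max ((\<lambda>j. max ((b j)\<^sup>2) (kh_r \<delta> n_in b j)) ` {1..i})
    \<and> kh_r \<delta> n_in b i \<le> (kh_a \<delta> n_in b i)\<^sup>2 / (2 * kh_a \<delta> n_in b i - b i * bmax b i)"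
proof -
  define L where "L = 1/2 + ln (2 * real n_in / \<delta>)"
  have "2 * real n_in / \<delta> > 1" using assms(1,2,4) by (simp add: field_simps)
  hence L: "2*L - 1 > 0" unfolding L_def by simp
  have bm: "b j \<le> bmax b j" if "1 \<le> j" for j
    unfolding bmax_def using that by (intro Max_ge) auto
  have key: "kh_a \<delta> n_in b j > 0 \<and> 2 * kh_a \<delta> n_in b j - b j * bmax b j > 0
      \<and> 2 * kh_a \<delta> n_in b j - b j * bmax b j \<le> 2 * kh_a \<delta> n_in b j - (b j)^2" if j: "1 \<le> j" for j
  proof -
    have bj: "b j > 0" using assms(5) j by simp
    have B: "b j \<le> bmax b j" using bm j .
    have a: "kh_a \<delta> n_in b j = b j * bmax b j * L" unfolding kh_a_def L_def by simp
    have bB: "b j * bmax b j > 0" using bj B by simp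
    have "2 * kh_a \<delta> n_in b j - b j * bmax b j = b j * bmax b j * (2*L - 1)"
      using a by (simp add: algebra_simps)
    moreover have "(b j)^2 \<le> b j * bmax b j" using B bj by (simp add: power2_eq_square)
    ultimately show ?thesis using a bB L by (simp add: mult_pos_pos)
  qed
  define f where "f = (\<lambda>j. max ((b j)\<^sup>2) (kh_r \<delta> n_in b j))"
  have main: "1 \<le> k \<Longrightarrow> sigma2 \<delta> n_in b k \<le> Max (f ` {1..k})" for k
  proof (induction k)
    case 0 then show ?case by simp
  next
    case (Suc k)
    let ?a = "kh_a \<delta> n_in b (Suc k)"
    let ?s = "sigma2 \<delta> n_in b k"
    have k: "?a > 0" "2 * ?a - (b (Suc k))^2 > 0" using key[of "Suc k"] by auto
    have st: "sigma2 \<delta> n_in b (Suc k) \<le> max ?s (kh_r \<delta> n_in b (Suc k))"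
      using step_bound[OF k, of ?s] unfolding kh_r_def by simp
    have rle: "kh_r \<delta> n_in b (Suc k) \<le> Max (f ` {1..Suc k})"
    proof -
      have "kh_r \<delta> n_in b (Suc k) \<le> f (Suc k)" unfolding f_def by simp
      also have "\<dots> \<le> Max (f ` {1..Suc k})" by (rule Max_ge) auto
      finally show ?thesis .
    qed
    have "?s \<le> Max (f ` {1..Suc k})"
    proof (cases "k = 0")
      case True
      have "0 \<le> f 1" unfolding f_def by (simp add: le_max_iff_disj)
      also have "\<dots> \<le> Max (f ` {1..Suc k})" by (rule Max_ge) auto
      finally show ?thesis using True by simp
    next
      case False
      hence "?s \<le> Max (f ` {1..k})" using Suc.IH by simp
      also have "\<dots> \<le> Max (f ` {1..Suc k})" using False by (intro Max_mono) auto
      finally show ?thesis .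
    qed
    then show ?case using st rle by simp
  qed
  have r: "kh_r \<delta> n_in b i \<le> (kh_a \<delta> n_in b i)\<^sup>2 / (2 * kh_a \<delta> n_in b i - b i * bmax b i)"
    unfolding kh_r_def using key[OF assms(6)]
    by (intro divide_left_mono) (auto simp: mult_pos_pos)
  show ?thesis using main[OF assms(6)] r unfolding f_def by simp
qed

end
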